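(* Let $m\ge 2$ and let $n$ satisfy $2^m\le n<2^m+2^{m-1}-1$. Put $e=n-2^m+1$. Then every $f\in\mathbf{SB}_n$ satisfies $\mathcal{AI}(f)\le 2^{m-1}-1$ or $\deg(\sigma_e f)=2^{m-1}+e$.
   Context: $\mathbf{SB}_n$ is the set of symmetric Boolean functions on $n$ variables; $\sigma_e$ is the $e$-th elementary symmetric function of $x_1,\dots,x_n$ over $\mathbb{F}_2$; $\deg$ is the algebraic degree. The algebraic immunity of $f$ is $\mathcal{AI}(f)=\min\{\deg(g): g\neq0,\ gf=0 \text{ or } g(f+1)=0\}$. *)

theory Defs
  imports Main
begin

text \<open>A Boolean function on n variables x_0,...,x_{n-1} is modelled as a predicate on
  subsets of {..<n}: the input vector x is identified with its support {i. x_i = 1}.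
  Only the values on subsets of {..<n} are relevant.\<close>

type_synonym bfun = "nat set \<Rightarrow> bool"

definition symmetric_bf :: "nat \<Rightarrow> bfun \<Rightarrow> bool" where
  "symmetric_bf n f \<longleftrightarrow>
     (\<forall>A B. A \<subseteq> {..<n} \<longrightarrow> B \<subseteq> {..<n} \<longrightarrow> card A = card B \<longrightarrow> f A = f B)"

definition esym :: "nat \<Rightarrow> bfun" where
  "esym e x \<longleftrightarrow> odd (card x choose e)"

definition anf_coeff :: "bfun \<Rightarrow> nat set \<Rightarrow> bool" where
  "anf_coeff f S \<longleftrightarrow> odd (card {u. u \<subseteq> S \<and> f u})"

text \<open>Algebraic degree (the zero function gets degree 0).\<close>
definition alg_deg :: "nat \<Rightarrow> bfun \<Rightarrow> nat" where
  "alg_deg n f = Max (insert 0 {card S | S. S \<subseteq> {..<n} \<and> anf_coeff f S})"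

definition nonzero_bf :: "nat \<Rightarrow> bfun \<Rightarrow> bool" where
  "nonzero_bf n g \<longleftrightarrow> (\<exists>x \<subseteq> {..<n}. g x)"

definition annihilates :: "nat \<Rightarrow> bfun \<Rightarrow> bfun \<Rightarrow> bool" where
  "annihilates n g f \<longleftrightarrow> (\<forall>x \<subseteq> {..<n}. \<not> (g x \<and> f x))"

definition alg_immunity :: "nat \<Rightarrow> bfun \<Rightarrow> nat" where
  "alg_immunity n f = (LEAST d. \<exists>g. nonzero_bf n g \<and>
      (annihilates n g f \<or> annihilates n g (\<lambda>x. \<not> f x)) \<and> alg_deg n g = d)"

end

theory Submission imports Defs "HOL-Library.Z2"
begin
declare add_bit_eq_xor[simp del] mult_bit_eq_and[simp del]

lemma bit_double[simp]: "(x::bit) + x = 0"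
  by (cases x) (simp_all flip: one_add_one)

lemma bit_of_nat: "(of_nat n :: bit) = of_bool (odd n)"
  by (induction n) (auto simp: add.commute)

lemma shift_choose_gen:
  assumes K: "\<And>i. 0 < i \<Longrightarrow> i < K \<Longrightarrow> even (K choose i)" and K0: "0 < K"
  shows "(of_nat ((K + q) choose j) :: bit) = of_nat (q choose j) + (if K \<le> j then of_nat (q choose (j - K)) else 0)"
proof -
  define g where "g = (\<lambda>i. (of_nat ((K choose i) * (q choose (j - i))) :: bit))"
  have "(K + q) choose j = (\<Sum>i\<le>j. (K choose i) * (q choose (j - i)))" by (rule vandermonde[symmetric])
  hence "(of_nat ((K + q) choose j)::bit) = (\<Sum>i\<le>j. g i)" by (simp add: g_def)
  also have "\<dots> = (\<Sum>i\<in>{0} \<union> (if K \<le> j then {K} else {}). g i)"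
  proof (rule sum.mono_neutral_right)
    show "\<forall>i\<in>{..j} - ({0} \<union> (if K \<le> j then {K} else {})). g i = 0"
    proof
      fix i assume i: "i \<in> {..j} - ({0} \<union> (if K \<le> j then {K} else {}))"
      show "g i = 0"
      proof (cases "i < K")
        case True
        with i have "even (K choose i)" using K by (auto split: if_splits)
        thus ?thesis by (simp add: g_def bit_of_nat)
      next
        case False
        with i have "K < i" by (auto split: if_splits)
        thus ?thesis by (simp add: g_def binomial_eq_0)
      qed
    qed
  qed auto
  also have "\<dots> = of_nat (q choose j) + (if K \<le> j then of_nat (q choose (j - K)) else 0)"
    using K0 by (auto simp: g_def)
  finally show ?thesis .
qed

lemma even_choose_pow2: "0 < i \<Longrightarrow> i < 2^r \<Longrightarrow> even (2^r choose i)"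
proof (induction r arbitrary: i)
  case 0 thus ?case by simp
next
  case (Suc r)
  have "(of_nat ((2^r + 2^r) choose i) :: bit) = of_nat (2^r choose i) + (if 2^r \<le> i then of_nat (2^r choose (i - 2^r)) else 0)"
    by (rule shift_choose_gen) (use Suc.IH in auto)
  also have "\<dots> = 0"
  proof (cases "i < 2^r")
    case True thus ?thesis using Suc by (simp add: bit_of_nat)
  next
    case False
    show ?thesis
    proof (cases "i = 2^r")
      case True thus ?thesis by simp
    next
      case F2: False
      with False have "2^r < i" by simp
      moreover have "i - 2^r < 2^r" using Suc.prems by simp
      ultimately show ?thesis using Suc.IH[of "i - 2^r"] by (simp add: bit_of_nat binomial_eq_0)
    qed
  qed
  finally show ?case by (simp add: bit_of_nat mult_2)
qed

lemma shift_choose: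
  "(of_nat ((2^r + q) choose j) :: bit) = of_nat (q choose j) + (if 2^r \<le> j then of_nat (q choose (j - 2^r)) else 0)"
  by (rule shift_choose_gen) (auto intro: even_choose_pow2)


lemma card_subsets_pred:
  assumes "finite S"
  shows "card {u. u \<subseteq> S \<and> P (card u)} = (\<Sum>j\<le>card S. if P j then card S choose j else 0)"
proof -
  have eq: "{u. u \<subseteq> S \<and> P (card u)} = (\<Union>j\<in>{j\<in>{..card S}. P j}. {u. u \<subseteq> S \<and> card u = j})"
    using assms by (auto intro: card_mono)
  have "card (\<Union>j\<in>{j\<in>{..card S}. P j}. {u. u \<subseteq> S \<and> card u = j})
      = (\<Sum>j\<in>{j\<in>{..card S}. P j}. card {u. u \<subseteq> S \<and> card u = j})"
    by (rule card_UN_disjoint) (use assms in auto)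
  also have "\<dots> = (\<Sum>j\<in>{j\<in>{..card S}. P j}. card S choose j)" using n_subsets[OF assms] by simp
  also have "\<dots> = (\<Sum>j\<le>card S. if P j then card S choose j else 0)" by (rule sum.inter_filter) simp
  finally show ?thesis using eq by simp
qed

lemma anf_sym:
  assumes "finite S" "\<And>u. u \<subseteq> S \<Longrightarrow> h u = P (card u)"
  shows "anf_coeff h S \<longleftrightarrow> (\<Sum>j\<le>card S. if P j then (of_nat (card S choose j)::bit) else 0) = 1"
proof -
  have "{u. u \<subseteq> S \<and> h u} = {u. u \<subseteq> S \<and> P (card u)}" using assms(2) by auto
  hence "anf_coeff h S \<longleftrightarrow> odd (\<Sum>j\<le>card S. if P j then card S choose j else 0)"
    unfolding anf_coeff_def using card_subsets_pred[OF assms(1)] by simp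
  also have "\<dots> \<longleftrightarrow> (of_nat (\<Sum>j\<le>card S. if P j then card S choose j else 0) :: bit) = 1"
    by (simp add: bit_of_nat)
  also have "(of_nat (\<Sum>j\<le>card S. if P j then card S choose j else 0) :: bit)
     = (\<Sum>j\<le>card S. if P j then (of_nat (card S choose j)::bit) else 0)"
    by (simp add: of_nat_sum if_distrib cong: if_cong)
  finally show ?thesis .
qed

lemma sum_shift:
  "(\<Sum>j\<le>2^r + q. if P j then (of_nat ((2^r + q) choose j)::bit) else 0) =
   (\<Sum>j\<le>q. if P j then of_nat (q choose j) else 0) + (\<Sum>j\<le>q. if P (j + 2^r) then of_nat (q choose j) else 0)"
proof -
  let ?K = "2^r::nat"
  have "(\<Sum>j\<le>?K + q. if P j then (of_nat ((?K + q) choose j)::bit) else 0) =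
        (\<Sum>j\<le>?K + q. (if P j then of_nat (q choose j) else 0) + (if P j \<and> ?K \<le> j then of_nat (q choose (j - ?K)) else 0))"
    by (rule sum.cong) (auto simp: shift_choose)
  also have "\<dots> = (\<Sum>j\<le>?K + q. if P j then (of_nat (q choose j)::bit) else 0) + (\<Sum>j\<le>?K+q. if P j \<and> ?K \<le> j then of_nat (q choose (j - ?K)) else 0)"
    by (rule sum.distrib)
  also have "(\<Sum>j\<le>?K + q. if P j then (of_nat (q choose j)::bit) else 0) = (\<Sum>j\<le>q. if P j then of_nat (q choose j) else 0)"
    by (rule sum.mono_neutral_right) (auto simp: binomial_eq_0)
  also have "(\<Sum>j\<le>?K+q. if P j \<and> ?K \<le> j then (of_nat (q choose (j - ?K))::bit) else 0) = (\<Sum>j\<in>{0+?K..q+?K}. if P j then of_nat (q choose (j - ?K)) else 0)"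
    by (rule sum.mono_neutral_cong_right) auto
  also have "\<dots> = (\<Sum>j\<in>{0..q}. if P (j+?K) then of_nat (q choose j) else 0)"
    by (simp only: sum.shift_bounds_cl_nat_ivl) (simp cong: if_cong)
  also have "{0..q} = {..q}" by auto
  finally show ?thesis .
qed

lemma partA:
  fixes k w n :: nat
  assumes k: "k = 2^r" and w: "w < k"
  shows "alg_deg n (\<lambda>x. card x mod k = w) \<le> k - 1"
proof -
  have fin: "finite (insert 0 {card S | S. S \<subseteq> {..<n} \<and> anf_coeff (\<lambda>x. card x mod k = w) S})"
    by (rule finite_subset[of _ "{..n}"]) (auto dest: card_mono[of "{..<n}", simplified])
  have "card S \<le> k - 1" if S: "S \<subseteq> {..<n}" "anf_coeff (\<lambda>x. card x mod k = w) S" for S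
  proof (rule ccontr)
    assume "\<not> card S \<le> k - 1"
    moreover have "k > 0" using k by simp
    ultimately have "k \<le> card S" by arith
    then obtain q where cs: "card S = 2^r + q" using k by (metis le_add_diff_inverse)
    have fS: "finite S" using S(1) finite_subset by blast
    have "(\<Sum>j\<le>card S. if j mod k = w then (of_nat (card S choose j)::bit) else 0) = 1"
      using anf_sym[OF fS, of "\<lambda>x. card x mod k = w" "\<lambda>j. j mod k = w"] S(2) by simp
    moreover have "(\<Sum>j\<le>2^r + q. if j mod k = w then (of_nat ((2^r + q) choose j)::bit) else 0) = 0"
      by (simp only: sum_shift) (simp add: k)
    ultimately show False using cs by (simp cong: if_cong)
  qed
  thus ?thesis unfolding alg_deg_def using fin by (auto simp: Max_le_iff)
qed

lemma esym_coeff: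
  assumes "e \<le> s"
  shows "(\<Sum>j\<le>s. if odd (j choose e) \<and> v j then (of_nat (s choose j)::bit) else 0)
        = of_nat (s choose e) * (\<Sum>i\<le>s - e. if v (i + e) then of_nat ((s - e) choose i) else 0)"
proof -
  have "(\<Sum>j\<le>s. if odd (j choose e) \<and> v j then (of_nat (s choose j)::bit) else 0)
      = (\<Sum>j\<le>s. if v j then of_nat ((s choose j) * (j choose e)) else 0)"
    by (rule sum.cong) (auto simp: bit_of_nat)
  also have "\<dots> = (\<Sum>j\<in>{e..s}. if v j then of_nat ((s choose e) * ((s - e) choose (j - e))) else 0)"
    by (rule sum.mono_neutral_cong_right) (auto simp: binomial_eq_0 choose_mult)
  also have "\<dots> = (\<Sum>j\<in>{0+e..(s-e)+e}. if v j then of_nat ((s choose e) * ((s - e) choose (j - e))) else 0)"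
    using assms by simp
  also have "\<dots> = (\<Sum>i\<in>{0..s-e}. if v (i + e) then of_nat ((s choose e) * ((s - e) choose i)) else 0)"
    by (simp only: sum.shift_bounds_cl_nat_ivl) (simp cong: if_cong)
  also have "\<dots> = of_nat (s choose e) * (\<Sum>i\<le>s - e. if v (i + e) then of_nat ((s - e) choose i) else 0)"
    by (simp add: sum_distrib_left atLeast0AtMost if_distrib cong: if_cong)
  finally show ?thesis .
qed


theorem theorem5:
  fixes m n :: nat and f :: bfun
  assumes "m \<ge> 2"
    and "2 ^ m \<le> n" and "n < 2 ^ m + 2 ^ (m - 1) - 1"
    and "symmetric_bf n f"
  shows "alg_immunity n f \<le> 2 ^ (m - 1) - 1 \<or>
         alg_deg n (\<lambda>x. esym (n - 2 ^ m + 1) x \<and> f x) = 2 ^ (m - 1) + (n - 2 ^ m + 1)"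
proof -
  define r where "r = m - 1"
  define k where "k = (2::nat)^r"
  define e where "e = n - 2^m + 1"
  have mr: "m = Suc r" using assms(1) by (simp add: r_def)
  have m2: "(2::nat)^m = 2*k" by (simp add: mr k_def)
  have k2: "k \<ge> 2"
  proof -
    have "(2::nat)^1 \<le> 2^r" by (rule power_increasing) (use assms(1) in \<open>simp_all add: r_def\<close>)
    thus ?thesis by (simp add: k_def)
  qed
  have ne: "n = 2*k + e - 1" and e1: "1 \<le> e" and ek: "e < k"
    using assms(2,3) m2 unfolding e_def k_def[symmetric] r_def[symmetric] by auto
  define vv where "vv j = f {..<j}" for j
  have fv: "f x = vv (card x)" if x: "x \<subseteq> {..<n}" for x
  proof -
    have "card x \<le> n" using card_mono[OF _ x] by simp
    hence "f x = f {..<card x}" using assms(4)[unfolded symmetric_bf_def, rule_format, of x "{..<card x}"] x by simp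
    thus ?thesis unfolding vv_def .
  qed
  show ?thesis
  proof (cases "\<exists>w. e \<le> w \<and> w < k \<and> vv w = vv (w + k)")
    case True
    then obtain w where w: "e \<le> w" "w < k" "vv w = vv (w + k)" by blast
    define g where "g = (\<lambda>x::nat set. card x mod k = w)"
    have nz: "nonzero_bf n g" unfolding nonzero_bf_def g_def
      by (rule exI[of _ "{..<w}"]) (use w ne in auto)
    have wt: "f x = vv w" if x: "x \<subseteq> {..<n}" "g x" for x
    proof -
      have cn: "card x \<le> n" using card_mono[OF _ x(1)] by simp
      have "card x = w + k * (card x div k)" using x(2) unfolding g_def by (metis mod_mult_div_eq)
      moreover have "card x div k < 2"
      proof (rule ccontr)
        assume "\<not> card x div k < 2"
        hence "k * 2 \<le> k * (card x div k)" by simp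
        moreover have "card x = w + k * (card x div k)" using x(2) unfolding g_def by (metis mod_mult_div_eq)
        ultimately show False using cn ne w by linarith
      qed
      ultimately have "card x = w \<or> card x = w + k" by (auto simp: less_2_cases_iff)
      thus ?thesis using fv[OF x(1)] w(3) by auto
    qed
    have ann: "annihilates n g f \<or> annihilates n g (\<lambda>x. \<not> f x)"
      unfolding annihilates_def using wt by (cases "vv w") auto
    have deg: "alg_deg n g \<le> k - 1" unfolding g_def by (rule partA[OF k_def w(2)])
    have "alg_immunity n f \<le> alg_deg n g" unfolding alg_immunity_def
      by (rule Least_le) (use nz ann in blast)
    thus ?thesis using deg unfolding k_def r_def by simp
  next
    case False
    hence D: "\<And>w. e \<le> w \<Longrightarrow> w < k \<Longrightarrow> vv w \<noteq> vv (w + k)" by blast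
    define h where "h = (\<lambda>x. esym (n - 2 ^ m + 1) x \<and> f x)"
    define P where "P j = (odd (j choose e) \<and> vv j)" for j
    have coef: "anf_coeff h S \<longleftrightarrow> (\<Sum>j\<le>card S. if P j then (of_nat (card S choose j)::bit) else 0) = 1"
      if S: "S \<subseteq> {..<n}" for S
    proof (rule anf_sym)
      show "finite S" using S finite_subset by blast
      fix u assume "u \<subseteq> S"
      thus "h u = P (card u)" using fv[of u] S unfolding h_def P_def esym_def e_def by auto
    qed
    define M where "M t = (\<Sum>i\<le>t. if vv (i + e) then (of_nat (t choose i)::bit) else 0)" for t
    have Mk: "M (k + t) = of_bool (t = 0)" if t: "t \<le> k - 1 - e" for t
    proof -
      have "M (2^r + t) = (\<Sum>i\<le>t. if vv (i + e) then of_nat (t choose i) else 0) + (\<Sum>i\<le>t. if vv (i + 2^r + e) then of_nat (t choose i) else 0)"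
        unfolding M_def by (rule sum_shift)
      also have "\<dots> = (\<Sum>i\<le>t. (if vv (i + e) then of_nat (t choose i) else 0) + (if vv (i + e + k) then of_nat (t choose i) else 0))"
        by (simp add: sum.distrib k_def add.assoc add.commute[of e])
      also have "\<dots> = (\<Sum>i\<le>t. (of_nat (t choose i) :: bit))"
      proof (rule sum.cong)
        fix i assume "i \<in> {..t}"
        hence "vv (i + e) \<noteq> vv (i + e + k)" using D[of "i + e"] t ek by auto
        thus "(if vv (i + e) then of_nat (t choose i) else 0) + (if vv (i + e + k) then of_nat (t choose i) else 0) = (of_nat (t choose i) :: bit)"
          by auto
      qed simp
      also have "\<dots> = of_nat (2^t)" by (simp flip: of_nat_sum add: choose_row_sum)
      also have "\<dots> = of_bool (t = 0)" by (simp add: bit_of_nat)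
      finally show ?thesis by (simp add: k_def)
    qed
    have cs: "(\<Sum>j\<le>s. if P j then (of_nat (s choose j)::bit) else 0) = of_nat (s choose e) * M (s - e)"
      if "e \<le> s" for s
      unfolding P_def M_def by (rule esym_coeff[OF that])
    have upper: "card S \<le> k + e" if S: "S \<subseteq> {..<n}" "anf_coeff h S" for S
    proof (rule ccontr)
      assume gt: "\<not> card S \<le> k + e"
      have cn: "card S \<le> n" using card_mono[OF _ S(1)] by simp
      have "(\<Sum>j\<le>card S. if P j then (of_nat (card S choose j)::bit) else 0) = 0"
      proof (cases "card S < 2 * k")
        case True
        define t where "t = card S - e - k"
        have "card S - e = k + t" "t \<le> k - 1 - e" "t \<noteq> 0" using True gt unfolding t_def by auto
        thus ?thesis using cs[of "card S"] Mk[of t] gt by simp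
      next
        case False
        define q where "q = card S - 2 * k"
        have "card S = 2^m + q" using False m2 unfolding q_def by simp
        hence "(of_nat (card S choose e) :: bit) = of_nat (q choose e) + (if 2^m \<le> e then of_nat (q choose (e - 2^m)) else 0)"
          by (simp add: shift_choose)
        also have "\<dots> = 0" using m2 ek cn ne False unfolding q_def by (simp add: binomial_eq_0)
        finally show ?thesis using cs[of "card S"] gt by simp
      qed
      thus False using coef[OF S(1)] S(2) by simp
    qed
    have attained: "anf_coeff h {..<k + e}"
    proof -
      have sub: "{..<k + e} \<subseteq> {..<n}" using ne ek k2 by auto
      have "(of_nat ((2^r + e) choose e) :: bit) = of_nat (e choose e) + (if 2^r \<le> e then of_nat (e choose (e - 2^r)) else 0)"
        by (rule shift_choose)
      hence c1: "(of_nat ((k + e) choose e) :: bit) = 1" using ek by (simp add: k_def)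
      have "M k = 1" using Mk[of 0] by simp
      thus ?thesis using coef[OF sub] cs[of "k + e"] c1 by (simp cong: if_cong)
    qed
    have "alg_deg n h = k + e" unfolding alg_deg_def
    proof (rule Max_eqI)
      show "finite (insert 0 {card S |S. S \<subseteq> {..<n} \<and> anf_coeff h S})"
        by (rule finite_subset[of _ "{..n}"]) (auto dest: card_mono[of "{..<n}", simplified])
      show "y \<le> k + e" if "y \<in> insert 0 {card S |S. S \<subseteq> {..<n} \<and> anf_coeff h S}" for y
        using that upper by auto
      show "k + e \<in> insert 0 {card S |S. S \<subseteq> {..<n} \<and> anf_coeff h S}"
        using attained ne ek by (auto intro!: exI[of _ "{..<k + e}"])
    qed
    thus ?thesis unfolding h_def e_def k_def r_def by simp
  qed
qed

end
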